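(* Let $\mathbb{F}$ be a field, $m,b\in\mathbb{F}$ with $m\ne0$, $m\neq1$, let $\mathfrak{A}$ be the unital associative $\mathbb{F}$-algebra generated by $A,B$ subject to $AB=mBA+bI$, and let $C=AB-BA$. For every positive integer $n$, $$(m-1)^nA^nB^n=\prod_{i=1}^n(m^iC-bI),\qquad (m-1)^nB^nA^n=\prod_{i=0}^{n-1}(m^{-i}C-bI).$$
   Context: $I$ is the unity of $\mathfrak{A}$; the factors in each product commute since they are polynomials in $C$. *)

theory Defs
  imports Main "HOL.Vector_Spaces"
begin

definition is_algebra :: "('a::field \<Rightarrow> 'b::ring_1 \<Rightarrow> 'b) \<Rightarrow> bool" where
  "is_algebra s \<longleftrightarrow> module s \<and>
     (\<forall>c x y. s c (x * y) = s c x * y \<and> s c (x * y) = x * s c y)"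

end

theory Submission
  imports Defs
begin

lemma comm_prod:
  assumes "\<And>i. C * f i = f i * C"
  shows "C * prod_list (map f xs) = prod_list (map f xs) * C"
  using assms by (induction xs) (simp_all add: mult.assoc[symmetric], metis mult.assoc)

theorem mainTheorem7:
  fixes s :: "'a::field \<Rightarrow> 'b::ring_1 \<Rightarrow> 'b"
    and m b :: 'a and A B :: 'b and n :: nat
  assumes alg: "is_algebra s"
    and m0: "m \<noteq> 0" and m1: "m \<noteq> 1"
    and rel: "A * B = s m (B * A) + s b 1"
    and n: "n \<ge> 1"
  shows "s ((m - 1) ^ n) (A ^ n * B ^ n) =
           prod_list (map (\<lambda>i. s (m ^ i) (A * B - B * A) - s b 1) [1..<n+1])
     \<and> s ((m - 1) ^ n) (B ^ n * A ^ n) =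
           prod_list (map (\<lambda>i. s (inverse (m ^ i)) (A * B - B * A) - s b 1) [0..<n])"
proof -
  interpret M: module s using alg unfolding is_algebra_def by blast
  have L: "\<And>c x y. s c (x * y) = s c x * y" using alg unfolding is_algebra_def by blast
  have R: "\<And>c x y. s c (x * y) = x * s c y" using alg unfolding is_algebra_def by blast
  define C where "C = A * B - B * A"
  have b1: "\<And>x. x * s b 1 = s b 1 * x"
    by (metis L R mult_1_left mult_1_right)
  have AC: "A * C = s m (C * A)"
  proof -
    have "A * C = A * (A * B) - (A * B) * A" by (simp add: C_def algebra_simps)
    also have "\<dots> = s m (A * B * A) - s m (B * A * A)"
      by (simp add: rel algebra_simps M.scale_right_distrib M.scale_left_distrib
          flip: R L mult.assoc)
    also have "\<dots> = s m (C * A)" by (simp add: C_def algebra_simps M.scale_right_diff_distrib)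
    finally show ?thesis .
  qed
  have CB: "C * B = s m (B * C)"
  proof -
    have "C * B = (A * B) * B - B * (A * B)" by (simp add: C_def algebra_simps)
    also have "\<dots> = s m (B * A * B) - s m (B * B * A)"
      by (simp add: rel algebra_simps M.scale_right_distrib M.scale_left_distrib
          flip: R L mult.assoc)
    also have "\<dots> = s m (B * C)" by (simp add: C_def algebra_simps M.scale_right_diff_distrib)
    finally show ?thesis .
  qed
  have BC: "B * C = s (inverse m) (C * B)"
    using CB m0 by simp
  have AnC: "A ^ k * C = s (m ^ k) (C * A ^ k)" for k
  proof (induction k)
    case (Suc k)
    have "A ^ Suc k * C = A * (A ^ k * C)" by (simp add: mult.assoc)
    also have "\<dots> = s (m ^ k) (A * C * A ^ k)" by (simp add: Suc flip: R mult.assoc)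
    also have "\<dots> = s (m ^ Suc k) (C * A ^ Suc k)" by (simp add: AC flip: L mult.assoc) (simp add: mult.assoc mult.commute)
    finally show ?case .
  qed simp
  have BnC: "B ^ k * C = s (inverse m ^ k) (C * B ^ k)" for k
  proof (induction k)
    case (Suc k)
    have "B ^ Suc k * C = B * (B ^ k * C)" by (simp add: mult.assoc)
    also have "\<dots> = s (inverse m ^ k) (B * C * B ^ k)" by (simp add: Suc flip: R mult.assoc)
    also have "\<dots> = s (inverse m ^ Suc k) (C * B ^ Suc k)" by (simp add: BC flip: L mult.assoc) (simp add: mult.assoc mult.commute)
    finally show ?case .
  qed simp
  have AB: "s (m - 1) (A * B) = s m C - s b 1"
    by (simp add: C_def rel M.scale_left_diff_distrib M.scale_right_diff_distrib M.scale_right_distrib left_diff_distrib)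
  have BA: "s (m - 1) (B * A) = C - s b 1"
    by (simp add: C_def rel M.scale_left_diff_distrib)
  have commF: "C * prod_list (map (\<lambda>i. s (f i) C - s b 1) xs) = prod_list (map (\<lambda>i. s (f i) C - s b 1) xs) * C" for f xs
    by (rule comm_prod) (simp add: algebra_simps b1 flip: L R)
  have P1: "s ((m - 1) ^ k) (A ^ k * B ^ k) = prod_list (map (\<lambda>i. s (m ^ i) C - s b 1) [1..<k+1])" for k
  proof (induction k)
    case (Suc k)
    let ?P = "prod_list (map (\<lambda>i. s (m ^ i) C - s b 1) [1..<k+1])"
    have e: "A ^ Suc k * B ^ Suc k = A ^ k * (A * B) * B ^ k"
      by (simp only: power_Suc2[of A] power_Suc[of B] mult.assoc)
    have f: "A ^ k * (s m C - s b 1) = (s (m ^ Suc k) C - s b 1) * A ^ k"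
      by (simp add: algebra_simps AnC b1 flip: R L)
    have "s ((m - 1) ^ Suc k) (A ^ Suc k * B ^ Suc k) = s ((m - 1) ^ k) (A ^ k * s (m - 1) (A * B) * B ^ k)"
      unfolding e by (simp add: mult.commute flip: L R)
    also have "\<dots> = s ((m - 1) ^ k) ((s (m ^ Suc k) C - s b 1) * (A ^ k * B ^ k))"
      by (simp only: AB f mult.assoc)
    also have "\<dots> = (s (m ^ Suc k) C - s b 1) * ?P"
      by (metis R Suc.IH)
    also have "\<dots> = ?P * (s (m ^ Suc k) C - s b 1)"
      using commF[of "\<lambda>i. m ^ i" "[1..<k+1]"]
      by (simp add: algebra_simps b1 flip: L R)
    finally show ?case by simp
  qed simp
  have P2: "s ((m - 1) ^ k) (B ^ k * A ^ k) = prod_list (map (\<lambda>i. s (inverse (m ^ i)) C - s b 1) [0..<k])" for k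
  proof (induction k)
    case (Suc k)
    let ?P = "prod_list (map (\<lambda>i. s (inverse (m ^ i)) C - s b 1) [0..<k])"
    have e: "B ^ Suc k * A ^ Suc k = B ^ k * (B * A) * A ^ k"
      by (simp only: power_Suc2[of B] power_Suc[of A] mult.assoc)
    have f: "B ^ k * (C - s b 1) = (s (inverse (m ^ k)) C - s b 1) * B ^ k"
      by (simp add: algebra_simps BnC b1 power_inverse flip: R L)
    have "s ((m - 1) ^ Suc k) (B ^ Suc k * A ^ Suc k) = s ((m - 1) ^ k) (B ^ k * s (m - 1) (B * A) * A ^ k)"
      unfolding e by (simp add: mult.commute flip: L R)
    also have "\<dots> = s ((m - 1) ^ k) ((s (inverse (m ^ k)) C - s b 1) * (B ^ k * A ^ k))"
      by (simp only: BA f mult.assoc)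
    also have "\<dots> = (s (inverse (m ^ k)) C - s b 1) * ?P"
      by (metis R Suc.IH)
    also have "\<dots> = ?P * (s (inverse (m ^ k)) C - s b 1)"
      using commF[of "\<lambda>i. inverse (m ^ i)" "[0..<k]"]
      by (simp add: algebra_simps b1 flip: L R)
    finally show ?case by simp
  qed simp
  show ?thesis using P1 P2 unfolding C_def by blast
qed

end
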